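(* In the setting of the context, for every $j\ge0$, the generating function $\varphi_j(x)=\sum_{i\ge0}\pi_{i,j}x^i$ satisfies $$\varphi_j(x)\sim C^j\pi_{0,0}(1-r_0x)^{-j-1}\quad\text{as } r_0x\to1,$$ i.e. $\lim_{r_0x\to1}(1-r_0x)^{j+1}\varphi_j(x)=C^j\pi_{0,0}$, where $$C=\frac{q}{\bar q}\cdot\frac{\bar p\mu_hr_0^2+(p\mu_h+\bar p\bar\mu_h)r_0+p\bar\mu_h}{p\bar\mu_h-\bar p\mu_hr_0^2}.$$
   Context: Fix $p,q,\mu_h,\mu_l\in(0,1)$ with $p+q+\mu_h+\mu_l=1$ and $\mu_l\le\mu_h$. For real $x$ write $\bar x=1-x$; let $\rho=p/\mu_h+q/\mu_l$ and assume $\rho<1$. Let $(Q_1(n),Q_2(n))_{n\ge0}$ be the discrete-time Markov chain on $\mathbb{Z}_{\ge0}^2$ (numbers of high- and low-priority customers in a discrete-time preemptive priority queue, early arrival system) whose one-step transition probabilities from $(i,j)$ to $(i+k,j+l)$ are as follows (unlisted transitions have probability $0$). If $i\ge1$, $j\ge0$: $(k,l)=(1,0)$: $p\bar q\bar\mu_h$; $(1,1)$: $pq\bar\mu_h$; $(0,1)$: $pq\mu_h+\bar pq\bar\mu_h$; $(-1,1)$: $\bar pq\mu_h$; $(-1,0)$: $\bar p\bar q\mu_h$; $(0,0)$: $\bar p\bar q\bar\mu_h+p\bar q\mu_h$. If $i=0$, $j\ge1$: $(1,0)$: $p\bar q\bar\mu_h$; $(1,1)$: $pq\bar\mu_h$;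 $(0,1)$: $pq\mu_h+\bar pq\bar\mu_l$; $(0,-1)$: $\bar p\bar q\mu_l$; $(0,0)$: $\bar p\bar q\bar\mu_l+p\bar q\mu_h+\bar pq\mu_l$. If $(i,j)=(0,0)$: $(1,0)$: $p\bar q\bar\mu_h$; $(1,1)$: $pq\bar\mu_h$; $(0,1)$: $pq\mu_h+\bar pq\bar\mu_l$; $(0,0)$: $\bar p\bar q+p\bar q\mu_h+\bar pq\mu_l$. Let $(\pi_{i,j})_{i,j\ge0}$ be its stationary distribution. Let $r_0=1/x_1(0)$, where $x_1(0)=\frac{1-(p\mu_h+\bar p\bar\mu_h)\bar q+\sqrt{\Delta(0)}}{2p\bar\mu_h\bar q}$ with $\Delta(0)=(p\mu_h-\bar p\bar\mu_h)^2\bar q^2-2(p\mu_h+\bar p\bar\mu_h)\bar q+1>0$ and the positive square root; $\varphi_j$ is understood as its analytic continuation to a neighbourhood of $1/r_0$ minus the point $1/r_0$, and the limit is taken within a $\Delta$-domain at $1/r_0$. *)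

theory Defs
  imports "HOL-Analysis.Analysis"
begin

text \<open>One-step transition probabilities of the discrete-time preemptive priority
queue (early arrival system).\<close>

definition trans_prob :: "real \<Rightarrow> real \<Rightarrow> real \<Rightarrow> real \<Rightarrow> nat \<times> nat \<Rightarrow> nat \<times> nat \<Rightarrow> real" where
  "trans_prob p q mh ml s t =
    (let i = fst s; j = snd s; k = int (fst t) - int i; l = int (snd t) - int j;
         pb = 1 - p; qb = 1 - q; mhb = 1 - mh; mlb = 1 - ml in
     if i \<ge> 1 then
       (if (k, l) = (1, 0) then p * qb * mhb
        else if (k, l) = (1, 1) then p * q * mhb
        else if (k, l) = (0, 1) then p * q * mh + pb * q * mhb
        else if (k, l) = (-1, 1) then pb * q * mh
        else if (k, l) = (-1, 0) then pb * qb * mh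
        else if (k, l) = (0, 0) then pb * qb * mhb + p * qb * mh
        else 0)
     else if j \<ge> 1 then
       (if (k, l) = (1, 0) then p * qb * mhb
        else if (k, l) = (1, 1) then p * q * mhb
        else if (k, l) = (0, 1) then p * q * mh + pb * q * mlb
        else if (k, l) = (0, -1) then pb * qb * ml
        else if (k, l) = (0, 0) then pb * qb * mlb + p * qb * mh + pb * q * ml
        else 0)
     else
       (if (k, l) = (1, 0) then p * qb * mhb
        else if (k, l) = (1, 1) then p * q * mhb
        else if (k, l) = (0, 1) then p * q * mh + pb * q * mlb
        else if (k, l) = (0, 0) then pb * qb + p * qb * mh + pb * q * ml
        else 0))"

definition stationary_dist :: "real \<Rightarrow> real \<Rightarrow> real \<Rightarrow> real \<Rightarrow> (nat \<Rightarrow> nat \<Rightarrow> real) \<Rightarrow> bool" where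
  "stationary_dist p q mh ml \<pi> \<longleftrightarrow>
     (\<forall>i j. \<pi> i j \<ge> 0) \<and>
     ((\<lambda>(i, j). \<pi> i j) has_sum 1) UNIV \<and>
     (\<forall>i' j'. ((\<lambda>(i, j). \<pi> i j * trans_prob p q mh ml (i, j) (i', j')) has_sum \<pi> i' j') UNIV)"

definition Delta0 :: "real \<Rightarrow> real \<Rightarrow> real \<Rightarrow> real" where
  "Delta0 p q mh = (p * mh - (1 - p) * (1 - mh))^2 * (1 - q)^2
                   - 2 * (p * mh + (1 - p) * (1 - mh)) * (1 - q) + 1"

definition x1_0 :: "real \<Rightarrow> real \<Rightarrow> real \<Rightarrow> real" where
  "x1_0 p q mh = (1 - (p * mh + (1 - p) * (1 - mh)) * (1 - q) + sqrt (Delta0 p q mh))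
                 / (2 * p * (1 - mh) * (1 - q))"

definition r0 :: "real \<Rightarrow> real \<Rightarrow> real \<Rightarrow> real" where
  "r0 p q mh = 1 / x1_0 p q mh"

definition Cconst :: "real \<Rightarrow> real \<Rightarrow> real \<Rightarrow> real" where
  "Cconst p q mh = (let r = r0 p q mh in
     q / (1 - q) * (((1 - p) * mh * r^2 + (p * mh + (1 - p) * (1 - mh)) * r + p * (1 - mh))
                    / (p * (1 - mh) - (1 - p) * mh * r^2)))"

text \<open>Delta-domain at zeta (Flajolet--Sedgewick): radius R > |zeta|, angle 0 < phi < pi/2.\<close>
definition delta_domain :: "complex \<Rightarrow> real \<Rightarrow> real \<Rightarrow> complex set" where
  "delta_domain \<zeta> R \<phi> = {z. cmod z < R \<and> z \<noteq> \<zeta> \<and> \<bar>Arg (z - \<zeta>)\<bar> > \<phi>}"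

end

theory Submission
  imports Defs
begin


lemma tp_nz:
  assumes "trans_prob p q mh ml (i, j) (i', j') \<noteq> 0"
  shows "(int i' - int i, int j' - int j) \<in> {(1,0),(1,1),(0,1),(-1,1),(-1,0),(0,0),(0,-1)}
     \<and> (int j' - int j = -1 \<longrightarrow> i = 0 \<and> i' = 0)"
  using assms unfolding trans_prob_def Let_def fst_conv snd_conv
  by (auto split: if_splits)

lemma tp_vals:
  "trans_prob p q mh ml (m, j) (Suc m, j) = p*(1-q)*(1-mh)"
  "trans_prob p q mh ml (Suc m, j) (Suc m, j) = (1-p)*(1-q)*(1-mh) + p*(1-q)*mh"
  "trans_prob p q mh ml (Suc (Suc m), j) (Suc m, j) = (1-p)*(1-q)*mh"
  "trans_prob p q mh ml (m, n) (Suc m, Suc n) = p*q*(1-mh)"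
  "trans_prob p q mh ml (Suc m, n) (Suc m, Suc n) = p*q*mh + (1-p)*q*(1-mh)"
  "trans_prob p q mh ml (Suc (Suc m), n) (Suc m, Suc n) = (1-p)*q*mh"
  by (simp_all add: trans_prob_def Let_def)

lemma row_eq_pos:
  assumes st: "stationary_dist p q mh ml \<pi>"
  shows "\<pi> (Suc m) (Suc n) = p*(1-q)*(1-mh) * \<pi> m (Suc n)
     + ((1-p)*(1-q)*(1-mh) + p*(1-q)*mh) * \<pi> (Suc m) (Suc n)
     + (1-p)*(1-q)*mh * \<pi> (Suc (Suc m)) (Suc n)
     + p*q*(1-mh) * \<pi> m n + (p*q*mh + (1-p)*q*(1-mh)) * \<pi> (Suc m) n
     + (1-p)*q*mh * \<pi> (Suc (Suc m)) n"
proof -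
  define f where "f = (\<lambda>(i, j). \<pi> i j * trans_prob p q mh ml (i, j) (Suc m, Suc n))"
  define S where "S = {(m,Suc n),(Suc m,Suc n),(Suc(Suc m),Suc n),(m,n),(Suc m,n),(Suc(Suc m),n)}"
  have h: "(f has_sum \<pi> (Suc m) (Suc n)) UNIV" using st unfolding stationary_dist_def f_def by blast
  have z: "f x = 0" if "x \<notin> S" for x
  proof (cases x)
    case (Pair i j)
    show ?thesis
    proof (rule ccontr)
      assume "f x \<noteq> 0"
      then have "trans_prob p q mh ml (i, j) (Suc m, Suc n) \<noteq> 0" unfolding f_def Pair by auto
      from tp_nz[OF this] have "(i,j) \<in> S" unfolding S_def by auto
      with that Pair show False by simp
    qed
  qed
  have "(f has_sum sum f S) UNIV"
  proof -
    have "(f has_sum sum f S) S" by (rule has_sum_finite) (simp add: S_def)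
    then show ?thesis using has_sum_cong_neutral[of UNIV S f f "sum f S"] z by auto
  qed
  then have "\<pi> (Suc m) (Suc n) = sum f S" using h has_sum_unique by blast
  then show ?thesis unfolding S_def f_def by (simp add: tp_vals algebra_simps)
qed

lemma row_eq_0:
  assumes st: "stationary_dist p q mh ml \<pi>"
  shows "\<pi> (Suc m) 0 = p*(1-q)*(1-mh) * \<pi> m 0
     + ((1-p)*(1-q)*(1-mh) + p*(1-q)*mh) * \<pi> (Suc m) 0
     + (1-p)*(1-q)*mh * \<pi> (Suc (Suc m)) 0"
proof -
  define f where "f = (\<lambda>(i, j). \<pi> i j * trans_prob p q mh ml (i, j) (Suc m, 0))"
  define S where "S = {(m,0::nat),(Suc m,0),(Suc(Suc m),0)}"
  have h: "(f has_sum \<pi> (Suc m) 0) UNIV" using st unfolding stationary_dist_def f_def by blast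
  have z: "f x = 0" if "x \<notin> S" for x
  proof (cases x)
    case (Pair i j)
    show ?thesis
    proof (rule ccontr)
      assume "f x \<noteq> 0"
      then have "trans_prob p q mh ml (i, j) (Suc m, 0) \<noteq> 0" unfolding f_def Pair by auto
      from tp_nz[OF this] have "(i,j) \<in> S" unfolding S_def by auto
      with that Pair show False by simp
    qed
  qed
  have "(f has_sum sum f S) UNIV"
  proof -
    have "(f has_sum sum f S) S" by (rule has_sum_finite) (simp add: S_def)
    then show ?thesis using has_sum_cong_neutral[of UNIV S f f "sum f S"] z by auto
  qed
  then have "\<pi> (Suc m) 0 = sum f S" using h has_sum_unique by blast
  then show ?thesis unfolding S_def f_def by (simp add: tp_vals algebra_simps)
qed



lemma r0_props:
  assumes "0<p" "p<1" "0<q" "q<1" "0<mh" "mh<1"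
  defines "A \<equiv> p*(1-q)*(1-mh)" and "B \<equiv> (1-p)*(1-q)*mh"
    and "T \<equiv> 1 - ((1-p)*(1-q)*(1-mh) + p*(1-q)*mh)"
  shows "0 < r0 p q mh" "r0 p q mh < 1" "B*(r0 p q mh)^2 - T*r0 p q mh + A = 0"
    "B * r0 p q mh < A"
proof -
  have Apos: "A > 0" and Bpos: "B > 0" unfolding A_def B_def using assms by auto
  have Teq: "T = A + B + q" unfolding A_def B_def T_def by (simp add: algebra_simps)
  have Deq: "Delta0 p q mh = T^2 - 4*A*B" unfolding Delta0_def A_def B_def T_def
    by (simp add: algebra_simps power2_eq_square)
  define sq where "sq = sqrt (Delta0 p q mh)"
  have e1: "Delta0 p q mh - (A - B)^2 = q*(2*A+2*B+q)" unfolding Deq Teq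
    by (simp add: power2_eq_square algebra_simps)
  have e2: "Delta0 p q mh - (B + q - A)^2 = 4*A*q" unfolding Deq Teq
    by (simp add: power2_eq_square algebra_simps)
  have "q*(2*A+2*B+q) > 0" using Apos Bpos \<open>0<q\<close> by simp
  then have D1: "Delta0 p q mh > (A - B)^2" using e1 by linarith
  have "4*A*q > 0" using Apos \<open>0<q\<close> by simp
  then have D2: "Delta0 p q mh > (B + q - A)^2" using e2 by linarith
  have Dpos: "Delta0 p q mh > 0" using D1 by (smt (verit) zero_le_power2)
  have sqsq: "sq^2 = Delta0 p q mh" unfolding sq_def using less_imp_le[OF Dpos] by simp
  have sq0: "sq \<ge> 0" unfolding sq_def using less_imp_le[OF Dpos] by simp
  have s1: "A - B < sq" unfolding sq_def using D1 by (simp add: real_less_rsqrt)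
  have s2: "B + q - A < sq" unfolding sq_def using D2 by (simp add: real_less_rsqrt)
  have t1: "1 - (p * mh + (1 - p) * (1 - mh)) * (1 - q) = T" unfolding T_def by (simp add: algebra_simps)
  have t2: "2 * p * (1 - mh) * (1 - q) = 2*A" unfolding A_def by (simp add: algebra_simps)
  have x1eq: "x1_0 p q mh = (T + sq) / (2*A)" unfolding x1_0_def sq_def t1 t2 by simp
  define x where "x = x1_0 p q mh"
  have x2A: "2*A*x = T + sq" unfolding x_def x1eq using Apos by simp
  have xgt1: "x > 1"
  proof -
    have "2*A*x > 2*A" unfolding x2A Teq using s1 Bpos \<open>0<q\<close> by linarith
    then show ?thesis using Apos by simp
  qed
  have quad: "A*x^2 - T*x + B = 0"
  proof -
    have "(2*A*x - T)^2 = T^2 - 4*A*B" using x2A sqsq Deq by simp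
    then have "4*A*(A*x^2 - T*x + B) = 0" by (simp add: power2_eq_square algebra_simps)
    then show ?thesis using Apos by simp
  qed
  have r0x: "r0 p q mh = 1/x" unfolding r0_def x_def by simp
  show "0 < r0 p q mh" "r0 p q mh < 1" using xgt1 r0x by auto
  show "B*(r0 p q mh)^2 - T*r0 p q mh + A = 0"
  proof -
    have "B*(1/x)^2 - T*(1/x) + A = (A*x^2 - T*x + B)/x^2" using xgt1
      by (simp add: field_simps power2_eq_square)
    then show ?thesis using quad r0x by simp
  qed
  show "B * r0 p q mh < A"
  proof -
    have "A*x > T - A" using x2A s2 Teq by linarith
    moreover have "B = T*x - A*x^2" using quad by simp
    then have "A*x - B = x*(A*x - (T - A))" by (simp add: algebra_simps power2_eq_square)
    ultimately have "A*x - B > 0" using xgt1 by simp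
    then have "A*x > B" by simp
    then have "B * (1/x) < A * x * (1/x)" using xgt1 by (intro mult_strict_right_mono) auto
    then show ?thesis using r0x xgt1 by simp
  qed
qed




lemma choose_sum_pow:
  fixes x :: "'a::{real_normed_field}"
  shows "(\<Sum>i\<le>n. of_nat (i choose k) * x^i * x^(n-i)) = of_nat (Suc n choose Suc k) * x^n"
proof -
  have "(\<Sum>i\<le>n. of_nat (i choose k) * x^i * x^(n-i)) = (\<Sum>i\<le>n. of_nat (i choose k) * x^n)"
    by (intro sum.cong refl) (simp add: mult.assoc power_add[symmetric])
  also have "\<dots> = of_nat (\<Sum>i\<le>n. i choose k) * x^n" by (simp add: sum_distrib_right)
  also have "\<dots> = of_nat (Suc n choose Suc k) * x^n" by (simp add: sum_choose_upper)
  finally show ?thesis .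
qed

lemma gf_step:
  fixes x :: "'a::{real_normed_field,banach}"
  assumes x: "norm x < 1"
    and a: "summable (\<lambda>i. norm (of_nat (i choose k) * x^i))"
    and s: "(\<lambda>i. of_nat (i choose k) * x^i) sums (x^k / (1-x)^(k+1))"
  shows "(\<lambda>i. of_nat (i choose Suc k) * x^i) sums (x^Suc k / (1-x)^(Suc k+1))"
proof -
  have b: "summable (\<lambda>i. norm (x^i))" using x by (simp add: norm_power summable_geometric)
  have g: "(\<lambda>i. x^i) sums (1/(1-x))" using x geometric_sums by blast
  have x1: "1 - x \<noteq> 0" using x by auto
  from Cauchy_product_sums[OF a b]
  have "(\<lambda>n. \<Sum>i\<le>n. of_nat (i choose k) * x^i * x^(n-i)) sums
      ((\<Sum>i. of_nat (i choose k) * x^i) * (\<Sum>i. x^i))" .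
  then have "(\<lambda>n. of_nat (Suc n choose Suc k) * x^n) sums (x^k / (1-x)^(k+1) * (1/(1-x)))"
    using sums_unique[OF s] sums_unique[OF g] by (simp add: choose_sum_pow)
  then have "(\<lambda>n. x * (of_nat (Suc n choose Suc k) * x^n)) sums (x * (x^k / (1-x)^(k+1) * (1/(1-x))))"
    by (rule sums_mult)
  then have "(\<lambda>n. of_nat (Suc n choose Suc k) * x^(Suc n)) sums (x^Suc k / (1-x)^(Suc k+1))"
    using x1 by (simp add: field_simps)
  then have "(\<lambda>n. of_nat (n choose Suc k) * x^n) sums (x^Suc k / (1-x)^(Suc k+1) + of_nat (0 choose Suc k) * x^0)"
    by (rule sums_Suc)
  then show ?thesis by simp
qed

lemma gf_real:
  fixes x :: real
  assumes "0 \<le> x" "x < 1"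
  shows "(\<lambda>i. real (i choose k) * x^i) sums (x^k / (1-x)^(k+1))"
proof (induction k)
  case 0
  then show ?case using geometric_sums[of x] assms by simp
next
  case (Suc k)
  have "summable (\<lambda>i. norm (real (i choose k) * x^i))"
    using Suc.IH assms by (simp add: sums_summable[OF Suc.IH])
  from gf_step[of x k, OF _ this] Suc.IH assms show ?case by simp
qed

lemma gf:
  fixes w :: "'a::{real_normed_field,banach}"
  assumes "norm w < 1"
  shows "(\<lambda>i. of_nat (i choose k) * w^i) sums (w^k / (1-w)^(k+1))"
proof (induction k)
  case 0
  then show ?case using geometric_sums[of w] assms by simp
next
  case (Suc k)
  have "summable (\<lambda>i. real (i choose k) * norm w^i)"
    using gf_real[of "norm w" k] assms sums_summable by fastforce
  then have "summable (\<lambda>i. norm (of_nat (i choose k) * w^i))"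
    by (simp add: norm_mult norm_power)
  from gf_step[of w k, OF assms this Suc.IH] show ?case .
qed


definition nb :: "(nat \<Rightarrow> real) \<Rightarrow> nat \<Rightarrow> nat \<Rightarrow> real" where
  "nb c N i = (\<Sum>k\<le>N. c k * real (i choose k))"

lemma nb_shift_gen:
  "(\<Sum>k\<le>N. c k * real (Suc i choose k)) =
   (\<Sum>k\<le>N. (c k + c (Suc k)) * real (i choose k)) - c (Suc N) * real (i choose N)"
  by (induction N) (simp_all add: algebra_simps)

lemma nb_shift:
  assumes "c (Suc N) = 0"
  shows "nb c N (Suc i) = nb (\<lambda>k. c k + c (Suc k)) N i"
  using nb_shift_gen[where N=N and c=c and i=i] assms unfolding nb_def by simp

primrec esol :: "(nat \<Rightarrow> real) \<Rightarrow> real \<Rightarrow> real \<Rightarrow> nat \<Rightarrow> nat \<Rightarrow> real" where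
  "esol g \<gamma> \<beta> N 0 = g N / \<gamma>"
| "esol g \<gamma> \<beta> N (Suc t) = (g (N - Suc t) - \<beta> * esol g \<gamma> \<beta> N t) / \<gamma>"

definition dsol :: "(nat \<Rightarrow> real) \<Rightarrow> real \<Rightarrow> real \<Rightarrow> nat \<Rightarrow> nat \<Rightarrow> real" where
  "dsol g \<gamma> \<beta> N k = (if k \<le> N then esol g \<gamma> \<beta> N (N - k) else 0)"

lemma dsol_eq:
  assumes "\<gamma> \<noteq> 0" "k \<le> N"
  shows "\<gamma> * dsol g \<gamma> \<beta> N k + \<beta> * dsol g \<gamma> \<beta> N (Suc k) = g k"
proof (cases "k = N")
  case True
  then show ?thesis using assms by (simp add: dsol_def)
next
  case False
  then have kN: "k < N" using assms by simp
  then have e: "N - k = Suc (N - Suc k)" by simp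
  have "N - Suc (N - Suc k) = k" using kN by simp
  then show ?thesis using assms kN unfolding dsol_def e by (simp add: field_simps)
qed

lemma dsol_top: "\<gamma> \<noteq> 0 \<Longrightarrow> dsol g \<gamma> \<beta> N N = g N / \<gamma>"
  by (simp add: dsol_def)

lemma dsol_zero: "N < k \<Longrightarrow> dsol g \<gamma> \<beta> N k = 0"
  by (simp add: dsol_def)

lemma gf_real_choose_lim:
  fixes r :: real assumes "0 \<le> r" "r < 1"
  shows "(\<lambda>i. real (i choose k) * r^i) \<longlonglongrightarrow> 0"
  using summable_LIMSEQ_zero[OF sums_summable[OF gf_real[OF assms, of k]]] .

lemma nb_geo_bounded:
  fixes r :: real assumes "0 \<le> r" "r < 1"
  shows "\<exists>K. \<forall>m. \<bar>nb c N m * r^m\<bar> \<le> K"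
proof -
  have "(\<lambda>m. \<Sum>k\<le>N. c k * (real (m choose k) * r^m)) \<longlonglongrightarrow> (\<Sum>k\<le>N. c k * 0)"
    by (intro tendsto_sum tendsto_mult tendsto_const gf_real_choose_lim assms)
  then have "(\<lambda>m. nb c N m * r^m) \<longlonglongrightarrow> 0" unfolding nb_def
    by (simp add: sum_distrib_right mult.assoc)
  then have "Bseq (\<lambda>m. nb c N m * r^m)" using convergent_imp_Bseq convergentI by blast
  then show ?thesis unfolding Bseq_def by (metis real_norm_def)
qed

lemma sum_choose_less: "(\<Sum>m<i. m choose k) = i choose Suc k"
  by (induction i) simp_all

lemma excl:
  fixes e :: "nat \<Rightarrow> real"
  assumes "\<beta> > 0" "0 < r" "\<alpha> * r > \<beta>"
    and rec: "\<And>m. \<beta> * e (Suc m) = \<alpha> * e m"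
    and bnd: "\<And>m. \<bar>e m * r^m\<bar> \<le> K"
  shows "e m = 0"
proof -
  define t where "t = \<alpha> * r / \<beta>"
  have t1: "t > 1" unfolding t_def using assms by simp
  have em: "e m * r^m = t^m * e 0" for m
  proof (induction m)
    case 0 then show ?case by simp
  next
    case (Suc m)
    have "e (Suc m) = \<alpha> / \<beta> * e m" using rec[of m] assms(1) by (simp add: field_simps)
    then have "e (Suc m) * r^Suc m = t * (e m * r^m)" unfolding t_def by (simp add: field_simps)
    then show ?case using Suc by simp
  qed
  have e0: "e 0 = 0"
  proof (rule ccontr)
    assume ne: "e 0 \<noteq> 0"
    obtain n where n: "K / \<bar>e 0\<bar> < t^n" using real_arch_pow[OF t1] by blast
    have "K < t^n * \<bar>e 0\<bar>" using n ne by (simp add: field_simps)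
    also have "\<dots> = \<bar>e n * r^n\<bar>" using em[of n] t1 by (simp add: abs_mult)
    also have "\<dots> \<le> K" by (rule bnd)
    finally show False by simp
  qed
  show ?thesis using em[of m] e0 assms(2) by simp
qed


lemma row_solve:
  fixes u g :: "nat \<Rightarrow> real"
  assumes bpos: "\<beta> > 0" and r0: "0 < r" and r1: "r < 1" and ar: "\<alpha> * r > \<beta>"
    and rec: "\<And>m. \<beta>*(u (Suc (Suc m)) - u (Suc m)) - \<alpha>*(u (Suc m) - u m) = nb g N m"
    and bnd: "\<And>m. \<bar>(u (Suc m) - u m) * r^m\<bar> \<le> K"
  shows "\<exists>c. c 0 = u 0 \<and> c (Suc N) = g N / (\<beta> - \<alpha>) \<and> (\<forall>k>Suc N. c k = 0)
            \<and> (\<forall>i. u i = nb c (Suc N) i)"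
proof -
  define \<gamma> where "\<gamma> = \<beta> - \<alpha>"
  have "\<alpha> > \<beta>"
  proof -
    have "\<alpha> > 0" using ar bpos r0 by (smt (verit) mult_nonpos_nonneg)
    then have "\<alpha> * r < \<alpha>" using r1 by simp
    then show ?thesis using ar by simp
  qed
  then have g0: "\<gamma> \<noteq> 0" unfolding \<gamma>_def by simp
  define d where "d = dsol g \<gamma> \<beta> N"
  define Dp where "Dp m = nb d N m" for m
  have dS: "d (Suc N) = 0" unfolding d_def by (simp add: dsol_zero)
  have Dp_rec: "\<beta> * Dp (Suc m) - \<alpha> * Dp m = nb g N m" for m
  proof -
    have "Dp (Suc m) = nb (\<lambda>k. d k + d (Suc k)) N m" unfolding Dp_def using nb_shift[where c=d and N=N, OF dS] .
    then have "\<beta> * Dp (Suc m) - \<alpha> * Dp m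
       = (\<Sum>k\<le>N. (\<gamma> * d k + \<beta> * d (Suc k)) * real (m choose k))"
      unfolding Dp_def nb_def \<gamma>_def
      by (simp add: sum_distrib_left sum_subtractf[symmetric] algebra_simps)
    also have "\<dots> = (\<Sum>k\<le>N. g k * real (m choose k))"
      by (intro sum.cong refl) (simp add: d_def dsol_eq[OF g0])
    finally show ?thesis unfolding nb_def .
  qed
  define e where "e m = (u (Suc m) - u m) - Dp m" for m
  have erec: "\<beta> * e (Suc m) = \<alpha> * e m" for m
    using rec[of m] Dp_rec[of m] unfolding e_def by (simp add: algebra_simps)
  obtain K2 where K2: "\<And>m. \<bar>Dp m * r^m\<bar> \<le> K2"
    using nb_geo_bounded[of r d N] r0 r1 unfolding Dp_def by auto
  have ebnd: "\<bar>e m * r^m\<bar> \<le> K + K2" for m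
  proof -
    have "e m * r^m = (u (Suc m) - u m) * r^m - Dp m * r^m" unfolding e_def by (simp add: algebra_simps)
    then show ?thesis using bnd[of m] K2[of m] by linarith
  qed
  have ez: "e m = 0" for m
    using excl[of \<beta> r \<alpha> e "K+K2" m] bpos r0 ar erec ebnd by blast
  have diff: "u (Suc m) - u m = Dp m" for m using ez[of m] unfolding e_def by simp
  have usum: "u i = u 0 + (\<Sum>m<i. Dp m)" for i
  proof (induction i)
    case 0 then show ?case by simp
  next
    case (Suc i) then show ?case using diff[of i] by simp
  qed
  have sumDp: "(\<Sum>m<i. Dp m) = (\<Sum>k\<le>N. d k * real (i choose Suc k))" for i
  proof -
    have "(\<Sum>m<i. Dp m) = (\<Sum>k\<le>N. \<Sum>m<i. d k * real (m choose k))"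
      unfolding Dp_def nb_def by (rule sum.swap)
    also have "\<dots> = (\<Sum>k\<le>N. d k * real (\<Sum>m<i. m choose k))"
      by (simp add: sum_distrib_left)
    also have "\<dots> = (\<Sum>k\<le>N. d k * real (i choose Suc k))" by (simp add: sum_choose_less)
    finally show ?thesis .
  qed
  define c where "c k = (if k = 0 then u 0 else d (k - 1))" for k
  have c0: "c 0 = u 0" and cS: "\<And>k. c (Suc k) = d k" by (simp_all add: c_def)
  have "u i = nb c (Suc N) i" for i
  proof -
    have "nb c (Suc N) i = c 0 * real (i choose 0) + (\<Sum>k\<le>N. c (Suc k) * real (i choose Suc k))"
      unfolding nb_def by (rule sum.atMost_Suc_shift)
    also have "\<dots> = u 0 + (\<Sum>k\<le>N. d k * real (i choose Suc k))"
      by (simp add: c0 cS)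
    also have "\<dots> = u 0 + (\<Sum>m<i. Dp m)" by (subst sumDp) (rule refl)
    finally show ?thesis using usum[of i] by simp
  qed
  moreover have "c (Suc N) = g N / (\<beta> - \<alpha>)" unfolding c_def d_def \<gamma>_def
    using dsol_top[OF g0] \<gamma>_def by simp
  moreover have "\<forall>k>Suc N. c k = 0" unfolding c_def d_def by (auto simp: dsol_zero)
  moreover have "c 0 = u 0" unfolding c_def by simp
  ultimately show ?thesis by blast
qed



lemma rec_alg:
  fixes x y :: "nat \<Rightarrow> real"
  assumes r: "r > 0" and quad: "B*r^2 - (1 - D6)*r + A = 0"
    and row: "x (Suc m) = A * x m + D6 * x (Suc m) + B * x (Suc (Suc m))
               + E1 * y m + E2 * y (Suc m) + E3 * y (Suc (Suc m))"
  shows "(B*r) * (x (Suc (Suc m)) / r^Suc (Suc m) - x (Suc m) / r^Suc m)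
        - (A/r) * (x (Suc m) / r^Suc m - x m / r^m)
       = - (E1/r * (y m / r^m) + E2 * (y (Suc m) / r^Suc m) + E3 * r * (y (Suc (Suc m)) / r^Suc (Suc m)))"
proof -
  define a where "a = r^m"
  have a: "a > 0" unfolding a_def using r by simp
  define u0 u1 u2 U0 U1 U2 where "u0 = x m / a" and "u1 = x (Suc m) / (a*r)" and "u2 = x (Suc (Suc m)) / (a*r^2)"
    and "U0 = y m / a" and "U1 = y (Suc m) / (a*r)" and "U2 = y (Suc (Suc m)) / (a*r^2)"
  have xs: "x m = a*u0" "x (Suc m) = a*r*u1" "x (Suc (Suc m)) = a*r^2*u2"
     "y m = a*U0" "y (Suc m) = a*r*U1" "y (Suc (Suc m)) = a*r^2*U2"
    unfolding u0_def u1_def u2_def U0_def U1_def U2_def using a r by simp_all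
  have pw: "r^Suc m = a*r" "r^Suc (Suc m) = a*r^2" unfolding a_def by (simp_all add: power2_eq_square)
  have "a*r*u1 = A*(a*u0) + D6*(a*r*u1) + B*(a*r^2*u2) + E1*(a*U0) + E2*(a*r*U1) + E3*(a*r^2*U2)"
    using row unfolding xs .
  moreover have "a*r*(u1 - (A/r*u0 + D6*u1 + B*r*u2 + E1/r*U0 + E2*U1 + E3*r*U2))
     = a*r*u1 - (A*(a*u0) + D6*(a*r*u1) + B*(a*r^2*u2) + E1*(a*U0) + E2*(a*r*U1) + E3*(a*r^2*U2))"
    using r by (simp add: field_simps power2_eq_square)
  ultimately have "a*r*(u1 - (A/r*u0 + D6*u1 + B*r*u2 + E1/r*U0 + E2*U1 + E3*r*U2)) = 0"
    by simp
  then have e1: "u1 = A/r*u0 + D6*u1 + B*r*u2 + E1/r*U0 + E2*U1 + E3*r*U2" using a r by simp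
  have T: "1 - D6 = B*r + A/r" using quad r by (simp add: field_simps power2_eq_square)
  have "(B*r)*(u2 - u1) - (A/r)*(u1 - u0) = -(E1/r*U0 + E2*U1 + E3*r*U2)"
  proof -
    have "(B*r)*(u2 - u1) - (A/r)*(u1 - u0) = B*r*u2 + A/r*u0 - (1 - D6)*u1"
      unfolding T by (simp add: algebra_simps diff_divide_distrib)
    then show ?thesis using e1 by (simp add: algebra_simps)
  qed
  moreover have "x (Suc (Suc m)) / r^Suc (Suc m) = u2" "x (Suc m) / r^Suc m = u1" "x m / r^m = u0"
    "y (Suc (Suc m)) / r^Suc (Suc m) = U2" "y (Suc m) / r^Suc m = U1" "y m / r^m = U0"
    unfolding pw u0_def u1_def u2_def U0_def U1_def U2_def a_def by simp_all
  ultimately show ?thesis by simp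
qed


lemma nb_lin: "nb (\<lambda>k. a * f k + b * g k + d * h k) N m = a * nb f N m + b * nb g N m + d * nb h N m"
  unfolding nb_def by (simp add: sum_distrib_left sum.distrib algebra_simps)

lemma pi_le1:
  assumes st: "stationary_dist p q mh ml \<pi>"
  shows "\<pi> i j \<le> 1" "0 \<le> \<pi> i j"
proof -
  have nn: "\<And>i j. \<pi> i j \<ge> 0" and hs: "((\<lambda>(i, j). \<pi> i j) has_sum 1) UNIV"
    using st unfolding stationary_dist_def by auto
  have h1: "((\<lambda>(i, j). \<pi> i j) has_sum \<pi> i j) {(i,j)}"
    using has_sum_finite[of "{(i,j)}" "\<lambda>(i, j). \<pi> i j"] by simp
  show "\<pi> i j \<le> 1"
    by (rule has_sum_mono_neutral[OF h1 hs]) (auto simp: nn)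
  show "0 \<le> \<pi> i j" by (rule nn)
qed

theorem lemma6p1:
  fixes p q mh ml :: real and \<pi> :: "nat \<Rightarrow> nat \<Rightarrow> real" and j :: nat
  assumes "0 < p" "p < 1" "0 < q" "q < 1" "0 < mh" "mh < 1" "0 < ml" "ml < 1"
    and "p + q + mh + ml = 1" and "ml \<le> mh"
    and "p / mh + q / ml < 1"
    and "stationary_dist p q mh ml \<pi>"
  shows "\<exists>R \<phi> g. R > 1 / r0 p q mh \<and> 0 < \<phi> \<and> \<phi> < pi / 2 \<and>
           g holomorphic_on delta_domain (complex_of_real (1 / r0 p q mh)) R \<phi> \<and>
           (\<forall>z. cmod z < 1 / r0 p q mh \<longrightarrow>
                  (\<lambda>i. complex_of_real (\<pi> i j) * z ^ i) sums g z) \<and>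
           ((\<lambda>z. (1 - complex_of_real (r0 p q mh) * z) ^ (j + 1) * g z)
              \<longlongrightarrow> complex_of_real (Cconst p q mh ^ j * \<pi> 0 0))
             (at (complex_of_real (1 / r0 p q mh))
                within delta_domain (complex_of_real (1 / r0 p q mh)) R \<phi>)"
proof -
  note st = assms(12)
  define r where "r = r0 p q mh"
  define A where "A = p*(1-q)*(1-mh)"
  define B where "B = (1-p)*(1-q)*mh"
  define D6 where "D6 = (1-p)*(1-q)*(1-mh) + p*(1-q)*mh"
  define E1 where "E1 = p*q*(1-mh)"
  define E2 where "E2 = p*q*mh + (1-p)*q*(1-mh)"
  define E3 where "E3 = (1-p)*q*mh"
  define Cc where "Cc = Cconst p q mh"
  have rpos: "0 < r" and rlt1: "r < 1" and quad: "B*r^2 - (1 - D6)*r + A = 0" and BrA: "B*r < A"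
    using r0_props[OF assms(1-6)] unfolding r_def A_def B_def D6_def by auto
  have Apos: "A > 0" and Bpos: "B > 0" unfolding A_def B_def using assms(1-6) by auto
  define \<alpha> where "\<alpha> = A / r"
  define \<beta> where "\<beta> = B * r"
  have bpos: "\<beta> > 0" unfolding \<beta>_def using Bpos rpos by simp
  have ar: "\<alpha> * r > \<beta>" unfolding \<alpha>_def \<beta>_def using rpos BrA by simp
  have ABr: "A - B*r^2 > 0"
  proof -
    have "B*r^2 = (B*r)*r" by (simp add: power2_eq_square)
    also have "\<dots> < (B*r)*1" using mult_strict_left_mono[OF rlt1, of "B*r"] Bpos rpos by simp
    finally show ?thesis using BrA by simp
  qed
  have Cc_eq: "-(E1/r + E2 + E3*r) / (\<beta> - \<alpha>) = Cc"
  proof -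
    have r2: "r^2 = r*r" by (simp add: power2_eq_square)
    have AB': "A - B*r^2 = (1-q) * (p * (1 - mh) - (1 - p) * mh * r\<^sup>2)"
      unfolding A_def B_def by (simp add: algebra_simps)
    have ne: "p*(1-mh) - (1-p)*mh*r^2 \<noteq> 0" using ABr unfolding AB' by auto
    have lhs: "-(E1/r + E2 + E3*r) / (\<beta> - \<alpha>) = (E1 + E2*r + E3*r^2) / (A - B*r^2)"
      unfolding \<alpha>_def \<beta>_def using rpos ABr by (simp add: field_simps power2_eq_square)
    define X where "X = (1 - p) * mh * r\<^sup>2 + (p * mh + (1 - p) * (1 - mh)) * r + p * (1 - mh)"
    define Y where "Y = p * (1 - mh) - (1 - p) * mh * r\<^sup>2"
    have n1: "E1 + E2*r + E3*r^2 = q * X"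
      unfolding E1_def E2_def E3_def X_def by (simp add: algebra_simps)
    have "(E1 + E2*r + E3*r^2) / (A - B*r^2) = (q * X) / ((1-q) * Y)"
      unfolding n1 AB' Y_def by (rule refl)
    also have "\<dots> = q / (1 - q) * (X / Y)" by simp
    finally have "(E1 + E2*r + E3*r^2) / (A - B*r^2) = q / (1 - q) * (X / Y)" .
    then have "(E1 + E2*r + E3*r^2) / (A - B*r^2) = q / (1 - q) *
        (((1 - p) * mh * r\<^sup>2 + (p * mh + (1 - p) * (1 - mh)) * r + p * (1 - mh)) /
         (p * (1 - mh) - (1 - p) * mh * r\<^sup>2))" unfolding X_def Y_def .
    then show ?thesis unfolding lhs Cc_def Cconst_def r_def[symmetric] Let_def .
  qed
  have pb: "0 \<le> \<pi> i k" "\<pi> i k \<le> 1" for i k using pi_le1[OF st] by auto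
  have bnd: "\<bar>(\<pi> (Suc m) k / r^Suc m - \<pi> m k / r^m) * r^m\<bar> \<le> 1/r + 1" for m k
  proof -
    have e: "(\<pi> (Suc m) k / r^Suc m - \<pi> m k / r^m) * r^m = \<pi> (Suc m) k / r - \<pi> m k"
      using rpos by (simp add: field_simps)
    have "\<pi> (Suc m) k / r \<le> 1/r" using pb rpos by (simp add: divide_right_mono)
    moreover have "0 \<le> \<pi> (Suc m) k / r" using pb rpos by simp
    moreover have "0 < 1/r" using rpos by simp
    ultimately show ?thesis unfolding e abs_le_iff using pb[of m k] by linarith
  qed
  have rows: "\<exists>c. (\<forall>k>n. c k = 0) \<and> c n = Cc^n * \<pi> 0 0 \<and> (\<forall>i. \<pi> i n = r^i * nb c n i)" for n
  proof (induction n)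
    case 0
    define u where "u i = \<pi> i 0 / r^i" for i
    have rec: "\<beta>*(u (Suc (Suc m)) - u (Suc m)) - \<alpha>*(u (Suc m) - u m) = nb (\<lambda>k. 0) 0 m" for m
    proof -
      have row: "\<pi> (Suc m) 0 = A * \<pi> m 0 + D6 * \<pi> (Suc m) 0 + B * \<pi> (Suc (Suc m)) 0
               + E1 * 0 + E2 * 0 + E3 * 0"
        using row_eq_0[OF st, of m] unfolding A_def B_def D6_def by simp
      show ?thesis using rec_alg[OF rpos quad row] unfolding u_def \<alpha>_def \<beta>_def nb_def by simp
    qed
    have ub: "\<And>m. \<bar>(u (Suc m) - u m) * r^m\<bar> \<le> 1/r+1" unfolding u_def by (rule bnd)
    from row_solve[OF bpos rpos rlt1 ar rec ub]
    obtain c where cc: "c 0 = u 0 \<and> c (Suc 0) = 0 / (\<beta> - \<alpha>) \<and> (\<forall>k>Suc 0. c k = 0)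
        \<and> (\<forall>i. u i = nb c (Suc 0) i)" ..
    note c = cc[THEN conjunct1] cc[THEN conjunct2, THEN conjunct1] cc[THEN conjunct2, THEN conjunct2, THEN conjunct1] cc[THEN conjunct2, THEN conjunct2, THEN conjunct2]
    have cz: "\<forall>k>0. c k = 0"
    proof (intro allI impI)
      fix k :: nat assume "k > 0"
      then show "c k = 0" using c(2,3) by (cases "k = 1") auto
    qed
    have "\<pi> i 0 = r^i * nb c 0 i" for i
    proof -
      have "u i = nb c 0 i" using c(4) cz unfolding nb_def by simp
      then show ?thesis unfolding u_def using rpos by (simp add: field_simps)
    qed
    moreover have "c 0 = Cc^0 * \<pi> 0 0" using c(1) unfolding u_def by simp
    ultimately show ?case using cz by blast
  next
    case (Suc n)
    then obtain c where ccc: "(\<forall>k>n. c k = 0) \<and> c n = Cc^n * \<pi> 0 0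
      \<and> (\<forall>i. \<pi> i n = r^i * nb c n i)" ..
    note cz = ccc[THEN conjunct1] and ctop = ccc[THEN conjunct2, THEN conjunct1]
      and crep = ccc[THEN conjunct2, THEN conjunct2]
    define c1 where "c1 k = c k + c (Suc k)" for k
    define c2 where "c2 k = c1 k + c1 (Suc k)" for k
    have cS: "c (Suc n) = 0" using cz by simp
    have c1S: "c1 (Suc n) = 0" unfolding c1_def using cz by simp
    define g where "g k = (-(E1/r)) * c k + (-E2) * c1 k + (-(E3*r)) * c2 k" for k
    define u where "u i = \<pi> i (Suc n) / r^i" for i
    have U: "\<pi> i n / r^i = nb c n i" for i using crep rpos by simp
    have U1: "nb c n (Suc m) = nb c1 n m" for m unfolding c1_def by (rule nb_shift[where c=c and N=n, OF cS])
    have U1': "nb c1 n (Suc m) = nb c2 n m" for m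
      unfolding c2_def by (rule nb_shift[where c=c1 and N=n, OF c1S])
    have U2: "nb c n (Suc (Suc m)) = nb c2 n m" for m
      unfolding U1 c2_def by (rule nb_shift[where c=c1 and N=n, OF c1S])
    have rec: "\<beta>*(u (Suc (Suc m)) - u (Suc m)) - \<alpha>*(u (Suc m) - u m) = nb g n m" for m
    proof -
      have row: "\<pi> (Suc m) (Suc n) = A * \<pi> m (Suc n) + D6 * \<pi> (Suc m) (Suc n) + B * \<pi> (Suc (Suc m)) (Suc n)
               + E1 * \<pi> m n + E2 * \<pi> (Suc m) n + E3 * \<pi> (Suc (Suc m)) n"
        using row_eq_pos[OF st, of m n] unfolding A_def B_def D6_def E1_def E2_def E3_def by simp
      have "nb g n m = (-(E1/r)) * nb c n m + (-E2) * nb c1 n m + (-(E3*r)) * nb c2 n m"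
        unfolding g_def by (rule nb_lin)
      moreover have "\<beta>*(u (Suc (Suc m)) - u (Suc m)) - \<alpha>*(u (Suc m) - u m)
         = - (E1/r * (\<pi> m n / r^m) + E2 * (\<pi> (Suc m) n / r^Suc m) + E3 * r * (\<pi> (Suc (Suc m)) n / r^Suc (Suc m)))"
        unfolding u_def \<alpha>_def \<beta>_def by (rule rec_alg[OF rpos quad row])
      ultimately show ?thesis unfolding U U1 U1' by (simp add: algebra_simps)
    qed
    have ub: "\<And>m. \<bar>(u (Suc m) - u m) * r^m\<bar> \<le> 1/r+1" unfolding u_def by (rule bnd)
    from row_solve[OF bpos rpos rlt1 ar rec ub]
    obtain c' where cc: "c' 0 = u 0 \<and> c' (Suc n) = g n / (\<beta> - \<alpha>) \<and> (\<forall>k>Suc n. c' k = 0)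
        \<and> (\<forall>i. u i = nb c' (Suc n) i)" ..
    note c' = cc[THEN conjunct1] cc[THEN conjunct2, THEN conjunct1] cc[THEN conjunct2, THEN conjunct2, THEN conjunct1] cc[THEN conjunct2, THEN conjunct2, THEN conjunct2]
    have gn: "g n = -(E1/r + E2 + E3*r) * c n"
      unfolding g_def c2_def c1_def using cz by (simp add: algebra_simps)
    have "c' (Suc n) = Cc^Suc n * \<pi> 0 0"
      unfolding c'(2) gn ctop using Cc_eq[symmetric] by (simp add: field_simps)
    moreover have "\<pi> i (Suc n) = r^i * nb c' (Suc n) i" for i
      using c'(4) rpos unfolding u_def by (simp add: field_simps)
    ultimately show ?case using c'(3) by blast
  qed
  from rows[of j] obtain c where ccc: "(\<forall>k>j. c k = 0) \<and> c j = Cc^j * \<pi> 0 0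
    \<and> (\<forall>i. \<pi> i j = r^i * nb c j i)" ..
  note cz = ccc[THEN conjunct1] and ctop = ccc[THEN conjunct2, THEN conjunct1]
    and crep = ccc[THEN conjunct2, THEN conjunct2]
  define \<zeta> where "\<zeta> = complex_of_real (1/r)"
  define rc where "rc = complex_of_real r"
  have rc0: "rc \<noteq> 0" unfolding rc_def using rpos by simp
  have rz: "rc * \<zeta> = 1" unfolding rc_def \<zeta>_def using rpos by (simp flip: of_real_mult)
  define G where "G z = (\<Sum>k\<le>j. of_real (c k) * (rc*z)^k / (1 - rc*z)^(k+1))" for z
  define P where "P z = (\<Sum>k\<le>j. of_real (c k) * (rc*z)^k * (1 - rc*z)^(j-k))" for z
  have ne1: "1 - rc*z \<noteq> 0" if "z \<noteq> \<zeta>" for z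
  proof
    assume "1 - rc*z = 0"
    then have "rc * z = rc * \<zeta>" using rz by simp
    then show False using that rc0 by simp
  qed
  have hol: "G holomorphic_on delta_domain \<zeta> (2/r) (pi/4)"
  proof -
    have "G holomorphic_on {z. z \<noteq> \<zeta>}" unfolding G_def
      by (intro holomorphic_intros) (auto dest: ne1)
    moreover have "delta_domain \<zeta> (2/r) (pi/4) \<subseteq> {z. z \<noteq> \<zeta>}" unfolding delta_domain_def by auto
    ultimately show ?thesis by (rule holomorphic_on_subset)
  qed
  have sm: "(\<lambda>i. complex_of_real (\<pi> i j) * z ^ i) sums G z" if z: "cmod z < 1/r" for z
  proof -
    have w: "norm (rc*z) < 1" using z rpos unfolding rc_def by (simp add: norm_mult field_simps)
    have "(\<lambda>i. \<Sum>k\<le>j. of_real (c k) * (of_nat (i choose k) * (rc*z)^i)) sums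
        (\<Sum>k\<le>j. of_real (c k) * ((rc*z)^k / (1 - rc*z)^(k+1)))"
      by (intro sums_sum sums_mult gf w)
    moreover have "complex_of_real (\<pi> i j) * z ^ i = (\<Sum>k\<le>j. of_real (c k) * (of_nat (i choose k) * (rc*z)^i))" for i
      unfolding crep[rule_format] nb_def rc_def
      by (simp add: sum_distrib_left sum_distrib_right power_mult_distrib mult_ac)
    ultimately show ?thesis unfolding G_def by simp
  qed
  have PG: "(1 - rc*z)^(j+1) * G z = P z" if "z \<noteq> \<zeta>" for z
  proof -
    have "(1 - rc*z)^(j+1) * G z = (\<Sum>k\<le>j. of_real (c k) * (rc*z)^k * ((1 - rc*z)^(j+1) / (1 - rc*z)^(k+1)))"
      unfolding G_def sum_distrib_left using ne1[OF that]
      by (intro sum.cong refl) (simp add: field_simps)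
    also have "\<dots> = P z" unfolding P_def
    proof (intro sum.cong refl)
      fix k assume "k \<in> {..j}"
      then have "j + 1 = (j - k) + (k + 1)" by simp
      then have "(1 - rc*z)^(j+1) = (1 - rc*z)^(j-k) * (1 - rc*z)^(k+1)" by (metis power_add)
      then show "of_real (c k) * (rc*z)^k * ((1 - rc*z)^(j+1) / (1 - rc*z)^(k+1))
          = of_real (c k) * (rc*z)^k * (1 - rc*z)^(j-k)" using ne1[OF that] by simp
    qed
    finally show ?thesis .
  qed
  have Pz: "P \<zeta> = of_real (c j)"
  proof -
    have "P \<zeta> = (\<Sum>k\<le>j. if k = j then of_real (c k) else 0)"
      unfolding P_def rz by (intro sum.cong refl) auto
    then show ?thesis by simp
  qed
  have Plim: "(P \<longlongrightarrow> P \<zeta>) (at \<zeta>)" unfolding P_def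
    by (intro tendsto_intros)
  have lim: "((\<lambda>z. (1 - rc*z)^(j+1) * G z) \<longlongrightarrow> of_real (c j)) (at \<zeta> within delta_domain \<zeta> (2/r) (pi/4))"
  proof -
    have "(P \<longlongrightarrow> of_real (c j)) (at \<zeta> within delta_domain \<zeta> (2/r) (pi/4))"
      using Plim Pz by (auto intro: tendsto_within_subset)
    moreover have "\<forall>\<^sub>F z in at \<zeta> within delta_domain \<zeta> (2/r) (pi/4). (1 - rc*z)^(j+1) * G z = P z"
      unfolding eventually_at_filter
      by (rule always_eventually, intro allI impI, rule PG, assumption)
    then have "((\<lambda>z. (1 - rc*z)^(j+1) * G z) \<longlongrightarrow> of_real (c j)) (at \<zeta> within delta_domain \<zeta> (2/r) (pi/4))
        \<longleftrightarrow> (P \<longlongrightarrow> of_real (c j)) (at \<zeta> within delta_domain \<zeta> (2/r) (pi/4))"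
      by (rule tendsto_cong)
    ultimately show ?thesis by simp
  qed
  have R: "2/r > 1/r" using rpos by (simp add: divide_strict_right_mono)
  show ?thesis
    apply (rule exI[of _ "2/r"], rule exI[of _ "pi/4"], rule exI[of _ G])
    using R hol sm lim ctop unfolding \<zeta>_def rc_def r_def Cc_def
    by (simp add: pi_gt_zero)
qed

end
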